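(* Let $T$ be a completely non-unitary contraction on $H$. Then, in the strong symplectic Hilbert space $\mathbb{H}=H\oplus_\perp H$, $$A_T^{\perp_s}=A_T\oplus_\perp Q\oplus_\perp Q_*,$$ where the direct sum is orthogonal with respect to the Hilbert space inner product of $\mathbb{H}$.
   Context: $H$ is an infinite-dimensional separable complex Hilbert space with inner product $(\cdot,\cdot)_H$. A contraction is $T\in\mathbb{B}(H)$ with $\|T\|\le1$; it is completely non-unitary (c.n.u.) if there is no nonzero invariant subspace $\mathcal{K}$ with $T|_{\mathcal{K}}$ unitary. Put $\mathbb{K}=\ker(I-T^*T)$, $\mathbb{K}_*=\ker(I-TT^* )$. Let $\mathbb{H}=H\oplus_\perp H$ with strong symplectic structure $[(x_1,x_2),(y_1,y_2)]=i(x_1,y_1)_H-i(x_2,y_2)_H$, and for $S\subseteq\mathbb{H}$ let $S^{\perp_s}=\{a\in\mathbb{H}:[a,b]=0\ \forall b\in S\}$. Let $A_T=\{(x,Tx):x\in\mathbb{K}\}$, $Q=\{(x,0):x\in\mathbb{K}^\perp\}$ and $Q_*=\{(0,x):x\in\mathbb{K}_*^\perp\}$. *)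

theory Defs
  imports "HOL-Analysis.Analysis"
begin

text \<open>Its real part is the underlying real inner product, which provides norm, metric and
  topology (norm x = sqrt (Re (cinner x x))).\<close>

class complex_inner = real_inner +
  fixes scaleC :: "complex \<Rightarrow> 'a \<Rightarrow> 'a"  (infixr \<open>*\<^sub>C\<close> 75)
    and cinner :: "'a \<Rightarrow> 'a \<Rightarrow> complex"
  assumes scaleC_add_right: "c *\<^sub>C (x + y) = c *\<^sub>C x + c *\<^sub>C y"
    and scaleC_add_left: "(c + d) *\<^sub>C x = c *\<^sub>C x + d *\<^sub>C x"
    and scaleC_scaleC: "c *\<^sub>C (d *\<^sub>C x) = (c * d) *\<^sub>C x"
    and scaleC_one: "1 *\<^sub>C x = x"
    and scaleR_scaleC: "scaleR r x = complex_of_real r *\<^sub>C x"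
    and cinner_add_right: "cinner x (y + z) = cinner x y + cinner x z"
    and cinner_scaleC_right: "cinner x (c *\<^sub>C y) = c * cinner x y"
    and cinner_commute: "cinner y x = cnj (cinner x y)"
    and inner_cinner: "inner x y = Re (cinner x y)"

class chilbert_space = complex_inner + complete_space

definition csubspace :: "'a::complex_inner set \<Rightarrow> bool" where
  "csubspace S \<longleftrightarrow> 0 \<in> S \<and> (\<forall>x\<in>S. \<forall>y\<in>S. x + y \<in> S) \<and> (\<forall>c. \<forall>x\<in>S. c *\<^sub>C x \<in> S)"

definition cspan :: "'a::complex_inner set \<Rightarrow> 'a set" where
  "cspan S = {\<Sum>x\<in>F. c x *\<^sub>C x | F c. finite F \<and> F \<subseteq> S}"

definition separable_H :: "'a::complex_inner itself \<Rightarrow> bool" where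
  "separable_H _ \<longleftrightarrow> (\<exists>D::'a set. countable D \<and> closure D = UNIV)"

definition infinite_dimensional :: "'a::complex_inner itself \<Rightarrow> bool" where
  "infinite_dimensional _ \<longleftrightarrow> \<not> (\<exists>S::'a set. finite S \<and> cspan S = UNIV)"

definition clinear :: "('a::complex_inner \<Rightarrow> 'b::complex_inner) \<Rightarrow> bool" where
  "clinear f \<longleftrightarrow> (\<forall>x y. f (x + y) = f x + f y) \<and> (\<forall>c x. f (c *\<^sub>C x) = c *\<^sub>C f x)"

definition contraction :: "('a::complex_inner \<Rightarrow> 'a) \<Rightarrow> bool" where
  "contraction T \<longleftrightarrow> clinear T \<and> (\<forall>x. norm (T x) \<le> norm x)"

definition cadjoint :: "('a::complex_inner \<Rightarrow> 'a) \<Rightarrow> ('a \<Rightarrow> 'a)" where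
  "cadjoint T = (THE S. \<forall>x y. cinner (S x) y = cinner x (T y))"

definition cnu :: "('a::complex_inner \<Rightarrow> 'a) \<Rightarrow> bool" where
  "cnu T \<longleftrightarrow> \<not> (\<exists>K. csubspace K \<and> closed K \<and> K \<noteq> {0} \<and> T ` K \<subseteq> K
                    \<and> T ` K = K \<and> (\<forall>x\<in>K. norm (T x) = norm x))"

definition corth :: "'a::complex_inner set \<Rightarrow> 'a set" where
  "corth S = {x. \<forall>y\<in>S. cinner x y = 0}"

definition defectK :: "('a::complex_inner \<Rightarrow> 'a) \<Rightarrow> 'a set" where
  "defectK T = {x. x - cadjoint T (T x) = 0}"

definition defectK_star :: "('a::complex_inner \<Rightarrow> 'a) \<Rightarrow> 'a set" where
  "defectK_star T = {x. x - T (cadjoint T x) = 0}"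

definition hinner :: "'a::complex_inner \<times> 'a \<Rightarrow> 'a \<times> 'a \<Rightarrow> complex" where
  "hinner a b = cinner (fst a) (fst b) + cinner (snd a) (snd b)"

definition sympl :: "'a::complex_inner \<times> 'a \<Rightarrow> 'a \<times> 'a \<Rightarrow> complex" where
  "sympl a b = \<i> * cinner (fst a) (fst b) - \<i> * cinner (snd a) (snd b)"

definition sperp :: "('a::complex_inner \<times> 'a) set \<Rightarrow> ('a \<times> 'a) set" where
  "sperp S = {a. \<forall>b\<in>S. sympl a b = 0}"

definition A_T :: "('a::complex_inner \<Rightarrow> 'a) \<Rightarrow> ('a \<times> 'a) set" where
  "A_T T = {(x, T x) | x. x \<in> defectK T}"

definition Q_T :: "('a::complex_inner \<Rightarrow> 'a) \<Rightarrow> ('a \<times> 'a) set" where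
  "Q_T T = {(x, 0) | x. x \<in> corth (defectK T)}"

definition Q_star_T :: "('a::complex_inner \<Rightarrow> 'a) \<Rightarrow> ('a \<times> 'a) set" where
  "Q_star_T T = {(0, x) | x. x \<in> corth (defectK_star T)}"

definition horth_sets :: "('a::complex_inner \<times> 'a) set \<Rightarrow> ('a \<times> 'a) set \<Rightarrow> bool" where
  "horth_sets S U \<longleftrightarrow> (\<forall>a\<in>S. \<forall>b\<in>U. hinner a b = 0)"

text \<open>Orthogonal direct sum of three subsets: the sum set, with pairwise orthogonality
  as part of the claim.\<close>
definition sum3 :: "('a::complex_inner \<times> 'a) set \<Rightarrow> ('a \<times> 'a) set \<Rightarrow> ('a \<times> 'a) set \<Rightarrow> ('a \<times> 'a) set" where
  "sum3 A B C = {(fst a + fst b + fst c, snd a + snd b + snd c) | a b c. a \<in> A \<and> b \<in> B \<and> c \<in> C}"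

end

theory Submission
  imports Defs
begin


lemma parallelogram_rinner:
  fixes x y :: "'a::real_inner"
  shows "norm (x + y)^2 + norm (x - y)^2 = 2 * norm x^2 + 2 * norm y^2"
  by (simp add: power2_norm_eq_inner inner_add_left inner_add_right inner_diff_left inner_diff_right inner_commute)

lemma norm_diff_scale_sq:
  fixes b y :: "'a::real_inner"
  shows "norm (b - t *\<^sub>R y)^2 = norm b^2 - 2 * t * inner b y + t^2 * inner y y"
  unfolding power2_norm_eq_inner by (simp add: power2_norm_eq_inner inner_diff_left inner_diff_right inner_commute power2_eq_square algebra_simps)

lemma real_proj_exists:
  fixes M :: "'a::{real_inner,complete_space} set"
  assumes clo: "closed M" and sub: "subspace M"
  shows "\<exists>m\<in>M. \<forall>y\<in>M. inner (a - m) y = 0"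
proof -
  define D where "D = (\<lambda>m. norm (a - m)) ` M"
  define d where "d = Inf D"
  have D0: "D \<noteq> {}" using sub subspace_0 D_def by blast
  have bdd: "bdd_below D" unfolding D_def by (rule bdd_belowI[of _ 0]) auto
  have dle: "d \<le> norm (a - y)" if "y \<in> M" for y
    unfolding d_def D_def using bdd D_def that by (auto intro: cInf_lower)
  have d0: "d \<ge> 0" unfolding d_def using D0 by (rule cInf_greatest) (auto simp: D_def)
  have "\<exists>m\<in>M. norm (a - m) < sqrt (d^2 + 1 / real (Suc n))" for n
  proof -
    have "d < sqrt (d^2 + 1 / real (Suc n))"
      using d0 by (metis add_pos_pos less_add_same_cancel1 of_nat_0_less_iff real_sqrt_less_iff real_sqrt_abs abs_of_nonneg zero_less_Suc zero_less_divide_1_iff real_less_rsqrt power2_eq_square)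
    then obtain x where "x \<in> D" "x < sqrt (d^2 + 1 / real (Suc n))"
      using cInf_lessD[OF D0] d_def by blast
    then show ?thesis unfolding D_def by auto
  qed
  then obtain ms where ms: "\<And>n. ms n \<in> M" "\<And>n. norm (a - ms n) < sqrt (d^2 + 1 / real (Suc n))"
    by metis
  have sq: "norm (a - ms n)^2 < d^2 + 1 / real (Suc n)" for n
  proof -
    have "norm (a - ms n)^2 < (sqrt (d^2 + 1 / real (Suc n)))^2"
      using ms(2)[of n] by (intro power_strict_mono) auto
    then show ?thesis by simp
  qed
  have key: "norm (ms n - ms k)^2 \<le> 2 / real (Suc n) + 2 / real (Suc k)" for n k
  proof -
    have mid: "(1/2) *\<^sub>R (ms n + ms k) \<in> M"
      using sub ms(1) by (simp add: subspace_add subspace_scale)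
    have "a - ms n + (a - ms k) = 2 *\<^sub>R (a - (1/2) *\<^sub>R (ms n + ms k))"
      by (simp add: algebra_simps scaleR_2)
    then have e1: "norm (a - ms n + (a - ms k))^2 = 4 * norm (a - (1/2) *\<^sub>R (ms n + ms k))^2"
      by (simp add: power2_eq_square)
    have "d^2 \<le> norm (a - (1/2) *\<^sub>R (ms n + ms k))^2"
      using dle[OF mid] d0 by (simp add: power_mono)
    moreover have "norm (a - ms n + (a - ms k))^2 + norm (ms n - ms k)^2
       = 2 * norm (a - ms n)^2 + 2 * norm (a - ms k)^2"
      using parallelogram_rinner[of "a - ms n" "a - ms k"]
      by (simp add: norm_minus_commute)
    ultimately show ?thesis using sq[of n] sq[of k] e1 by linarith
  qed
  have "Cauchy ms"
  proof (rule metric_CauchyI)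
    fix e :: real assume e: "e > 0"
    obtain N :: nat where N: "4 / e^2 < real N" using reals_Archimedean2 by blast
    show "\<exists>N. \<forall>m\<ge>N. \<forall>n\<ge>N. dist (ms m) (ms n) < e"
    proof (intro exI allI impI)
      fix m n assume mn: "N \<le> m" "N \<le> n"
      have N0: "real N > 0" using N e by (smt (verit) divide_pos_pos zero_less_power)
      have "2 / real (Suc m) \<le> 2 / real (Suc N)" "2 / real (Suc n) \<le> 2 / real (Suc N)"
        using mn by (auto intro!: divide_left_mono)
      moreover have "2 / real (Suc N) < e^2 / 2"
      proof -
        have "4 < e^2 * real N" using N e by (simp add: field_simps)
        moreover have "e^2 > 0" using e by simp
        ultimately show ?thesis by (simp add: field_simps) (smt (verit) \<open>e^2 > 0\<close>)
      qed
      ultimately have "norm (ms m - ms n)^2 < e^2" using key[of m n] by linarith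
      then have "norm (ms m - ms n) < e" using e by (simp add: power_less_imp_less_base)
      then show "dist (ms m) (ms n) < e" by (simp add: dist_norm)
    qed
  qed
  then obtain m where lim: "ms \<longlonglongrightarrow> m" using Cauchy_convergent convergent_def by blast
  have mM: "m \<in> M" using closed_sequentially[OF clo] ms(1) lim by blast
  have "(\<lambda>n. norm (a - ms n)) \<longlonglongrightarrow> norm (a - m)"
    by (intro tendsto_intros lim)
  moreover have "(\<lambda>n. sqrt (d^2 + 1 / real (Suc n))) \<longlonglongrightarrow> sqrt (d^2 + 0)"
    by (intro tendsto_intros LIMSEQ_inverse_real_of_nat[unfolded inverse_eq_divide])
  ultimately have "norm (a - m) \<le> sqrt (d^2 + 0)"
    using ms(2) by (intro LIMSEQ_le[where X="\<lambda>n. norm (a - ms n)"]) (auto intro: less_imp_le)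
  then have am: "norm (a - m) \<le> d" using d0 by simp
  show ?thesis
  proof (intro bexI[OF _ mM] ballI)
    fix y assume yM: "y \<in> M"
    show "inner (a - m) y = 0"
    proof (cases "y = 0")
      case True then show ?thesis by simp
    next
      case False
      define c where "c = inner (a - m) y"
      define N where "N = inner y y"
      have Npos: "N > 0" using False N_def by simp
      have "\<And>t::real. norm (a - m)^2 \<le> norm (a - m - t *\<^sub>R y)^2"
      proof -
        fix t :: real
        have "m + t *\<^sub>R y \<in> M" using sub mM yM by (simp add: subspace_add subspace_scale)
        then have "d \<le> norm (a - (m + t *\<^sub>R y))" by (rule dle)
        then have "norm (a - m) \<le> norm (a - m - t *\<^sub>R y)" using am by (simp add: algebra_simps)
        then show "norm (a - m)^2 \<le> norm (a - m - t *\<^sub>R y)^2" by (simp add: power_mono)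
      qed
      then have "norm (a - m)^2 \<le> norm (a - m - (c / N) *\<^sub>R y)^2" by blast
      also have "norm (a - m - (c / N) *\<^sub>R y)^2 = norm (a - m)^2 - 2 * (c/N) * c + (c/N)^2 * N"
        unfolding c_def N_def by (rule norm_diff_scale_sq)
      finally have "0 \<le> - 2 * (c/N) * c + (c/N)^2 * N" by simp
      also have "- 2 * (c/N) * c + (c/N)^2 * N = -((c^2) / N)" using Npos by (simp add: field_simps power2_eq_square)
      finally have "c^2 \<le> 0" using Npos by (simp add: divide_nonneg_pos field_simps)
      then show ?thesis using c_def by simp
    qed
  qed
qed

lemma scaleC_zero_left [simp]: "(0::complex) *\<^sub>C (x::'a::complex_inner) = 0"
  using scaleR_scaleC[of 0 x] by simp

lemma scaleC_zero_right [simp]: "c *\<^sub>C (0::'a::complex_inner) = 0"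
  using scaleC_add_right[of c "0::'a" 0] by simp

lemma scaleC_minus_one: "(-1) *\<^sub>C (x::'a::complex_inner) = - x"
  using scaleR_scaleC[of "-1" x] by simp

lemma cinner_zero_right [simp]: "cinner (x::'a::complex_inner) 0 = 0"
  using cinner_add_right[of x 0 0] by simp

lemma cinner_add_left: "cinner ((x::'a::complex_inner) + y) z = cinner x z + cinner y z"
  by (metis cinner_commute cinner_add_right complex_cnj_add)

lemma cinner_zero_left [simp]: "cinner 0 (x::'a::complex_inner) = 0"
  by (metis cinner_commute cinner_zero_right complex_cnj_zero)

lemma cinner_minus_right: "cinner (x::'a::complex_inner) (- y) = - cinner x y"
  by (metis cinner_scaleC_right scaleC_minus_one mult_minus1)

lemma cinner_scaleC_left: "cinner (c *\<^sub>C (x::'a::complex_inner)) y = cnj c * cinner x y"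
  by (metis cinner_commute cinner_scaleC_right complex_cnj_mult)

lemma cinner_minus_left: "cinner (- (x::'a::complex_inner)) y = - cinner x y"
  by (metis cinner_scaleC_left scaleC_minus_one mult_minus1 complex_cnj_minus complex_cnj_one)

lemma cinner_diff_right: "cinner (x::'a::complex_inner) (y - z) = cinner x y - cinner x z"
  using cinner_add_right[of x y "- z"] cinner_minus_right[of x z] by simp

lemma cinner_diff_left: "cinner ((x::'a::complex_inner) - y) z = cinner x z - cinner y z"
  using cinner_add_left[of x "- y" z] cinner_minus_left[of y z] by simp

lemma Re_cinner: "Re (cinner (x::'a::complex_inner) y) = inner x y"
  by (simp add: inner_cinner)

lemma cinner_self_zero: "cinner (x::'a::complex_inner) x = 0 \<Longrightarrow> x = 0"
  using Re_cinner[of x x] by simp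

lemma cinner_ext: "(\<And>y. cinner (a::'a::complex_inner) y = cinner b y) \<Longrightarrow> a = b"
proof -
  assume h: "\<And>y. cinner a y = cinner b y"
  have "cinner (a - b) (a - b) = 0" using h[of "a - b"] by (simp add: cinner_diff_left)
  then have "a - b = 0" by (rule cinner_self_zero)
  then show "a = b" by simp
qed

lemma cinner_from_inner:
  assumes "inner (x::'a::complex_inner) y = 0" "inner x (\<i> *\<^sub>C y) = 0"
  shows "cinner x y = 0"
proof -
  have "Re (cinner x y) = 0" using assms(1) by (simp add: Re_cinner)
  moreover have "Re (\<i> * cinner x y) = 0" using assms(2) by (simp add: inner_cinner cinner_scaleC_right)
  ultimately show ?thesis by (simp add: complex_eq_iff)
qed

lemma csubspace_subspace: "csubspace M \<Longrightarrow> subspace M"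
  unfolding csubspace_def subspace_def by (simp add: scaleR_scaleC)

lemma cproj_exists:
  fixes M :: "'a::chilbert_space set"
  assumes "closed M" "csubspace M"
  shows "\<exists>m\<in>M. a - m \<in> corth M"
proof -
  obtain m where m: "m \<in> M" "\<forall>y\<in>M. inner (a - m) y = 0"
    using real_proj_exists[OF assms(1) csubspace_subspace[OF assms(2)]] by blast
  have "a - m \<in> corth M"
    unfolding corth_def
  proof (intro CollectI ballI)
    fix y assume y: "y \<in> M"
    have "\<i> *\<^sub>C y \<in> M" using y assms(2) by (simp add: csubspace_def)
    then show "cinner (a - m) y = 0" using m y by (intro cinner_from_inner) auto
  qed
  then show ?thesis using m by blast
qed

lemma clinear_zero: "clinear f \<Longrightarrow> f 0 = 0"
  unfolding clinear_def by (metis add_cancel_right_right add_0)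

lemma clinear_minus: "clinear f \<Longrightarrow> f (- x) = - f x"
  unfolding clinear_def by (metis scaleC_minus_one)

lemma clinear_diff: "clinear f \<Longrightarrow> f (x - y) = f x - f y"
  using clinear_minus[of f y] unfolding clinear_def by (metis diff_conv_add_uminus)

lemma contraction_bl: "contraction f \<Longrightarrow> bounded_linear f"
  unfolding contraction_def clinear_def
  by (intro bounded_linear_intro[where K=1]) (auto simp: scaleR_scaleC)

lemma riesz:
  fixes f :: "'a::chilbert_space \<Rightarrow> complex"
  assumes add: "\<And>y z. f (y + z) = f y + f z"
    and sc: "\<And>c y. f (c *\<^sub>C y) = c * f y"
    and clo: "closed {y. f y = 0}"
  shows "\<exists>z. \<forall>y. cinner z y = f y"
proof (cases "\<forall>v. f v = 0")
  case True then show ?thesis by (intro exI[of _ 0]) simp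
next
  case False
  then obtain v where v: "f v \<noteq> 0" by blast
  define N where "N = {y. f y = 0}"
  have f0: "f 0 = 0" using sc[of 0 0] by simp
  have fm: "f (- y) = - f y" for y using sc[of "-1" y] by (simp add: scaleC_minus_one)
  have fd: "f (y - z) = f y - f z" for y z using add[of y "- z"] fm[of z] by simp
  have cs: "csubspace N" unfolding csubspace_def N_def using f0 add sc by auto
  obtain m where m: "m \<in> N" "v - m \<in> corth N"
    using cproj_exists[OF clo[folded N_def] cs] by blast
  define r where "r = v - m"
  have fr: "f r \<noteq> 0" using v m(1) fd by (simp add: r_def N_def)
  have r0: "r \<noteq> 0" using fr f0 by auto
  have rr: "cinner r r \<noteq> 0" using r0 cinner_self_zero by blast
  have rcN: "\<forall>w\<in>N. cinner r w = 0" using m(2) r_def by (simp add: corth_def)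
  define z where "z = cnj (f r / cinner r r) *\<^sub>C r"
  show ?thesis
  proof (intro exI allI)
    fix y
    have "f (y - (f y / f r) *\<^sub>C r) = 0" using fd sc fr by simp
    then have "cinner r (y - (f y / f r) *\<^sub>C r) = 0" using rcN N_def by blast
    then have e: "cinner r y = (f y / f r) * cinner r r"
      by (simp add: cinner_diff_right cinner_scaleC_right)
    show "cinner z y = f y"
      unfolding z_def cinner_scaleC_left e using fr rr by simp
  qed
qed

lemma adjoint_exists:
  fixes T :: "'a::chilbert_space \<Rightarrow> 'a"
  assumes "contraction T"
  shows "\<exists>S. \<forall>x y. cinner (S x) y = cinner x (T y)"
proof -
  have bl: "bounded_linear T" using contraction_bl[OF assms] .
  have lin: "clinear T" using assms contraction_def by blast
  have "\<exists>z. \<forall>y. cinner z y = cinner x (T y)" for x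
  proof (rule riesz)
    show "cinner x (T (y + z)) = cinner x (T y) + cinner x (T z)" for y z
      using lin by (simp add: clinear_def cinner_add_right)
    show "cinner x (T (c *\<^sub>C y)) = c * cinner x (T y)" for c y
      using lin by (simp add: clinear_def cinner_scaleC_right)
    have "{y. cinner x (T y) = 0} = {y. inner x (T y) = 0} \<inter> {y. inner (\<i> *\<^sub>C x) (T y) = 0}"
    proof (intro set_eqI iffI)
      fix y assume "y \<in> {y. cinner x (T y) = 0}"
      then show "y \<in> {y. inner x (T y) = 0} \<inter> {y. inner (\<i> *\<^sub>C x) (T y) = 0}"
        by (simp add: inner_cinner cinner_scaleC_left)
    next
      fix y assume y: "y \<in> {y. inner x (T y) = 0} \<inter> {y. inner (\<i> *\<^sub>C x) (T y) = 0}"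
      have "Re (cinner x (T y)) = 0" using y by (simp add: inner_cinner)
      moreover have "Im (cinner x (T y)) = 0" using y by (simp add: inner_cinner cinner_scaleC_left)
      ultimately show "y \<in> {y. cinner x (T y) = 0}" by (simp add: complex_eq_iff)
    qed
    moreover have "closed {y. inner x (T y) = 0}" "closed {y. inner (\<i> *\<^sub>C x) (T y) = 0}"
      by (intro closed_Collect_eq continuous_intros linear_continuous_on bl)+
    ultimately show "closed {y. cinner x (T y) = 0}" by (simp add: closed_Int)
  qed
  then show ?thesis by metis
qed

lemma cadjoint_prop:
  fixes T :: "'a::chilbert_space \<Rightarrow> 'a"
  assumes "contraction T"
  shows "cinner (cadjoint T x) y = cinner x (T y)"
proof -
  obtain S where S: "\<forall>x y. cinner (S x) y = cinner x (T y)" using adjoint_exists[OF assms] by blast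
  have "\<forall>x y. cinner (cadjoint T x) y = cinner x (T y)"
    unfolding cadjoint_def
  proof (rule theI[where a=S])
    show "\<forall>x y. cinner (S x) y = cinner x (T y)" by (rule S)
    fix S' assume "\<forall>x y. cinner (S' x) y = cinner x (T y)"
    then show "S' = S" using S by (intro ext cinner_ext) auto
  qed
  then show ?thesis by blast
qed

lemma cadjoint_contraction:
  fixes T :: "'a::chilbert_space \<Rightarrow> 'a"
  assumes c: "contraction T"
  shows "contraction (cadjoint T)"
proof -
  let ?S = "cadjoint T"
  note adj = cadjoint_prop[OF c]
  have linT: "clinear T" using c contraction_def by blast
  have a1: "?S (x + y) = ?S x + ?S y" for x y
  proof (rule cinner_ext)
    fix z show "cinner (?S (x + y)) z = cinner (?S x + ?S y) z"
      by (simp only: adj cinner_add_left)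
  qed
  have a2: "?S (a *\<^sub>C x) = a *\<^sub>C ?S x" for a x
  proof (rule cinner_ext)
    fix z show "cinner (?S (a *\<^sub>C x)) z = cinner (a *\<^sub>C ?S x) z"
      by (simp only: adj cinner_scaleC_left)
  qed
  have lin: "clinear ?S" unfolding clinear_def using a1 a2 by blast
  have "norm (?S y) \<le> norm y" for y
  proof -
    have "norm (?S y)^2 = inner y (T (?S y))"
      by (simp add: power2_norm_eq_inner inner_cinner adj)
    also have "\<dots> \<le> norm y * norm (T (?S y))" by (rule norm_cauchy_schwarz)
    also have "\<dots> \<le> norm y * norm (?S y)" using c by (simp add: contraction_def mult_left_mono)
    finally have "norm (?S y) * norm (?S y) \<le> norm y * norm (?S y)" by (simp add: power2_eq_square)
    then show ?thesis by (cases "norm (?S y) = 0") auto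
  qed
  then show ?thesis using lin contraction_def by blast
qed

theorem lemma4p2:
  fixes T :: "'a::chilbert_space \<Rightarrow> 'a"
  assumes "separable_H TYPE('a)"
    and "infinite_dimensional TYPE('a)"
    and "contraction T"
    and "cnu T"
  shows "sperp (A_T T) = sum3 (A_T T) (Q_T T) (Q_star_T T)
         \<and> horth_sets (A_T T) (Q_T T) \<and> horth_sets (A_T T) (Q_star_T T)
         \<and> horth_sets (Q_T T) (Q_star_T T)"
proof -
  let ?S = "cadjoint T"
  note c = assms(3)
  note adj = cadjoint_prop[OF c]
  have linT: "clinear T" using c contraction_def by blast
  have linS: "clinear ?S" using cadjoint_contraction[OF c] contraction_def by blast
  have K: "x \<in> defectK T \<longleftrightarrow> ?S (T x) = x" for x by (auto simp: defectK_def)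
  have Ks: "x \<in> defectK_star T \<longleftrightarrow> T (?S x) = x" for x by (auto simp: defectK_star_def)
  have KKs: "x \<in> defectK T \<Longrightarrow> T x \<in> defectK_star T" for x
    unfolding K Ks by simp
  have KsK: "y \<in> defectK_star T \<Longrightarrow> ?S y \<in> defectK T" for y
    unfolding K Ks by simp
  have iso: "cinner (T u) (T x) = cinner u x" if x: "x \<in> defectK T" for u x
  proof -
    have "cinner (T u) (T x) = cnj (cinner (T x) (T u))" by (rule cinner_commute)
    also have "\<dots> = cnj (cinner (?S (T x)) u)" by (simp only: adj)
    also have "\<dots> = cnj (cinner x u)" using x K by simp
    also have "\<dots> = cinner u x" by (simp only: cinner_commute[of u x] complex_cnj_cnj)
    finally show ?thesis .
  qed
  have blS: "bounded_linear ?S" by (rule contraction_bl[OF cadjoint_contraction[OF c]])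
  have blT: "bounded_linear T" by (rule contraction_bl[OF c])
  have "bounded_linear (\<lambda>x. x - T (?S x))"
    by (intro bounded_linear_sub bounded_linear_ident bounded_linear_compose[OF blT blS])
  then have "continuous_on UNIV (\<lambda>x. x - T (?S x))" by (rule linear_continuous_on)
  then have "closed {x. x - T (?S x) = 0}"
    by (intro closed_Collect_eq continuous_on_const)
  then have cloKs: "closed (defectK_star T)" by (simp add: defectK_star_def)
  have csKs: "csubspace (defectK_star T)"
    unfolding csubspace_def
  proof (intro conjI ballI allI)
    have "T (?S 0) = 0" using clinear_zero[OF linT] clinear_zero[OF linS] by simp
    then show "0 \<in> defectK_star T" using Ks by simp
  next
    fix x y assume "x \<in> defectK_star T" "y \<in> defectK_star T"
    then have "T (?S x) = x" "T (?S y) = y" using Ks by auto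
    then have "T (?S (x + y)) = x + y" using linT linS by (simp add: clinear_def)
    then show "x + y \<in> defectK_star T" using Ks by simp
  next
    fix c x assume "x \<in> defectK_star T"
    then have "T (?S x) = x" using Ks by auto
    then have "T (?S (c *\<^sub>C x)) = c *\<^sub>C x" using linT linS by (simp add: clinear_def)
    then show "c *\<^sub>C x \<in> defectK_star T" using Ks by simp
  qed
  have sp: "sperp (A_T T) = sum3 (A_T T) (Q_T T) (Q_star_T T)"
  proof (intro set_eqI iffI)
    fix p assume p: "p \<in> sperp (A_T T)"
    obtain a1 a2 where pa: "p = (a1, a2)" by (cases p)
    have eq: "cinner a1 x = cinner a2 (T x)" if "x \<in> defectK T" for x
    proof -
      have "sympl p (x, T x) = 0" using p that by (auto simp: sperp_def A_T_def)
      then have "\<i> * (cinner a1 x - cinner a2 (T x)) = 0"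
        by (simp add: sympl_def pa right_diff_distrib)
      then show ?thesis by simp
    qed
    obtain y where y: "y \<in> defectK_star T" "a2 - y \<in> corth (defectK_star T)"
      using cproj_exists[OF cloKs csKs] by blast
    define u where "u = ?S y"
    define w where "w = a1 - u"
    define z where "z = a2 - y"
    have uK: "u \<in> defectK T" using KsK y(1) u_def by simp
    have Tu: "T u = y" using Ks y(1) u_def by simp
    have wK: "w \<in> corth (defectK T)"
      unfolding corth_def
    proof (intro CollectI ballI)
      fix x assume x: "x \<in> defectK T"
      have "cinner w x = cinner a2 (T x) - cinner y (T x)"
        using eq[OF x] by (simp add: w_def u_def cinner_diff_left adj)
      also have "\<dots> = cinner z (T x)" by (simp add: z_def cinner_diff_left)
      also have "\<dots> = 0" using y(2) KKs[OF x] by (simp add: z_def corth_def)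
      finally show "cinner w x = 0" .
    qed
    have "p = (fst (u, T u) + fst (w, 0) + fst (0, z), snd (u, T u) + snd (w, 0) + snd (0, z))"
      by (simp add: pa w_def z_def Tu)
    moreover have "(u, T u) \<in> A_T T" using uK by (auto simp: A_T_def)
    moreover have "(w, 0) \<in> Q_T T" using wK by (auto simp: Q_T_def)
    moreover have "(0, z) \<in> Q_star_T T" using y(2) by (auto simp: Q_star_T_def z_def)
    ultimately show "p \<in> sum3 (A_T T) (Q_T T) (Q_star_T T)" unfolding sum3_def
      by (intro CollectI exI[of _ "(u, T u)"] exI[of _ "(w, 0)"] exI[of _ "(0, z)"]) simp
  next
    fix p assume "p \<in> sum3 (A_T T) (Q_T T) (Q_star_T T)"
    then obtain a b c where abc: "a \<in> A_T T" "b \<in> Q_T T" "c \<in> Q_star_T T"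
      and pabc: "p = (fst a + fst b + fst c, snd a + snd b + snd c)"
      unfolding sum3_def by blast
    obtain x0 where x0: "x0 \<in> defectK T" and ae: "a = (x0, T x0)" using abc(1) unfolding A_T_def by blast
    obtain w where w: "w \<in> corth (defectK T)" and be': "b = (w, 0)" using abc(2) unfolding Q_T_def by blast
    obtain z where z: "z \<in> corth (defectK_star T)" and ce: "c = (0, z)" using abc(3) unfolding Q_star_T_def by blast
    have pe: "p = (x0 + w + 0, T x0 + 0 + z)" using pabc ae be' ce by simp
    show "p \<in> sperp (A_T T)"
      unfolding sperp_def A_T_def
    proof (intro CollectI ballI)
      fix b assume "b \<in> {(x, T x) |x. x \<in> defectK T}"
      then obtain x where x: "x \<in> defectK T" and be: "b = (x, T x)" by auto
      have "cinner w x = 0" using w x by (simp add: corth_def)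
      moreover have "cinner z (T x) = 0" using z KKs[OF x] by (simp add: corth_def)
      moreover have "cinner (T x0) (T x) = cinner x0 x" using iso[OF x] .
      ultimately show "sympl p b = 0"
        by (simp add: pe be sympl_def cinner_add_left)
    qed
  qed
  have h1: "horth_sets (A_T T) (Q_T T)"
    unfolding horth_sets_def A_T_def Q_T_def
  proof (intro ballI)
    fix a b :: "'a \<times> 'a" assume a: "a \<in> {(x, T x) |x. x \<in> defectK T}" and b: "b \<in> {(x, 0) |x. x \<in> corth (defectK T)}"
    then obtain x w where "x \<in> defectK T" "a = (x, T x)" "w \<in> corth (defectK T)" "b = (w, 0)" by blast
    then have "cinner w x = 0" "a = (x, T x)" "b = (w, 0)" by (auto simp: corth_def)
    then show "hinner a b = 0" by (simp add: hinner_def cinner_commute[of x w])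
  qed
  have h2: "horth_sets (A_T T) (Q_star_T T)"
    unfolding horth_sets_def A_T_def Q_star_T_def
  proof (intro ballI)
    fix a b :: "'a \<times> 'a" assume a: "a \<in> {(x, T x) |x. x \<in> defectK T}" and b: "b \<in> {(0, x) |x. x \<in> corth (defectK_star T)}"
    then obtain x w where x: "x \<in> defectK T" "a = (x, T x)" "w \<in> corth (defectK_star T)" "b = (0, w)" by blast
    then have "cinner w (T x) = 0" using KKs[OF x(1)] by (auto simp: corth_def)
    then show "hinner a b = 0" using x by (simp add: hinner_def cinner_commute[of "T x" w])
  qed
  have h3: "horth_sets (Q_T T) (Q_star_T T)"
    unfolding horth_sets_def Q_T_def Q_star_T_def by (auto simp: hinner_def)
  show ?thesis using sp h1 h2 h3 by blast
qed


end
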